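(* Let $P$ be a lattice-face $d$-simplex with vertices $v_1,\dots,v_{d+1}$. For every $\sigma\in\mathfrak S_d$ and every $1\le k\le d$, $z(\sigma,k)/z(\sigma,k-1)\in\mathbb Z$, where $z(\sigma,0)=1$.
   Context: Write $v_i=(x_{i,1},\dots,x_{i,d})$. For $1\le k\le d$, $X(\sigma,k)$ is the $(k+1)\times(k+1)$ matrix with rows $(1,x_{\sigma(r),1},\dots,x_{\sigma(r),k})$, $r=1,\dots,k$, and last row $(1,x_{d+1,1},\dots,x_{d+1,k})$; $Y(\sigma,k)$ is the $k\times k$ matrix with rows $(1,x_{\sigma(r),1},\dots,x_{\sigma(r),k-1})$, $r=1,\dots,k$; $z(\sigma,k)=\det X(\sigma,k)/\det Y(\sigma,k)$ (these determinants are nonzero for lattice-face simplices). Lattice-face polytopes are defined recursively, with $\pi:\mathbb R^d\to\mathbb R^{d-1}$ forgetting the last coordinate: a segment in $\mathbb R$ is lattice-face if its endpoints are integers; for $d\ge2$, a $d$-polytope with vertex set $V$ is lattice-face if for every $d$-element $U\subset V$: (a) $\pi(\mathrm{conv}(U))$ is a lattice-face polytope in $\mathbb R^{d-1}$, and (b) $\pi(H_U\cap\mathbb Z^d)=\mathbb Z^{d-1}$, $H_U$ the affine span of $U$. *)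

theory Defs
  imports "HOL-Analysis.Analysis"
begin

text \<open>Points of R^d are represented as functions nat \<Rightarrow> real whose coordinates
  1..d are the actual coordinates and all other coordinates are 0.\<close>

definition Rd :: "nat \<Rightarrow> (nat \<Rightarrow> real) set" where
  "Rd d = {p. \<forall>j. j \<notin> {1..d} \<longrightarrow> p j = 0}"

definition Zd :: "nat \<Rightarrow> (nat \<Rightarrow> real) set" where
  "Zd d = {p \<in> Rd d. \<forall>j\<in>{1..d}. p j \<in> \<int>}"

definition proj :: "nat \<Rightarrow> (nat \<Rightarrow> real) \<Rightarrow> (nat \<Rightarrow> real)" where
  "proj d p = p(d := 0)"

definition conv_hull :: "(nat \<Rightarrow> real) set \<Rightarrow> (nat \<Rightarrow> real) set" where
  "conv_hull S = {y. \<exists>F c. finite F \<and> F \<subseteq> S \<and> F \<noteq> {} \<and> (\<forall>x\<in>F. 0 \<le> c x)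
       \<and> sum c F = 1 \<and> y = (\<lambda>j. \<Sum>x\<in>F. c x * x j)}"

definition aff_hull :: "(nat \<Rightarrow> real) set \<Rightarrow> (nat \<Rightarrow> real) set" where
  "aff_hull S = {y. \<exists>F c. finite F \<and> F \<subseteq> S \<and> F \<noteq> {}
       \<and> sum c F = 1 \<and> y = (\<lambda>j. \<Sum>x\<in>F. c x * x j)}"

definition vertices_of :: "(nat \<Rightarrow> real) set \<Rightarrow> (nat \<Rightarrow> real) set" where
  "vertices_of S = {x \<in> S. x \<notin> conv_hull (S - {x})}"

definition polytope_vertices :: "nat \<Rightarrow> (nat \<Rightarrow> real) set \<Rightarrow> bool" where
  "polytope_vertices d V \<longleftrightarrow> finite V \<and> V \<subseteq> Rd d \<and> vertices_of V = V \<and> aff_hull V = Rd d"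

fun lattice_face :: "nat \<Rightarrow> (nat \<Rightarrow> real) set \<Rightarrow> bool" where
  "lattice_face 0 V = False"
| "lattice_face (Suc 0) V = (polytope_vertices 1 V \<and> (\<forall>v\<in>V. v 1 \<in> \<int>))"
| "lattice_face (Suc (Suc n)) V =
     (polytope_vertices (Suc (Suc n)) V \<and>
      (\<forall>U. U \<subseteq> V \<and> card U = Suc (Suc n) \<longrightarrow>
         lattice_face (Suc n) (vertices_of (proj (Suc (Suc n)) ` U)) \<and>
         proj (Suc (Suc n)) ` (aff_hull U \<inter> Zd (Suc (Suc n))) = Zd (Suc n)))"

definition detn :: "nat \<Rightarrow> (nat \<Rightarrow> nat \<Rightarrow> real) \<Rightarrow> real" where
  "detn n A = (\<Sum>p | p permutes {..<n}. of_int (sign p) * (\<Prod>i<n. A i (p i)))"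

text \<open>X(sigma,k): (k+1)x(k+1); rows r = 0..k-1 are (1, x_{sigma(r+1),1..k}),
  last row (r = k) is (1, x_{d+1,1..k}).  v i j = x_{i,j}.\<close>
definition Xmat :: "(nat \<Rightarrow> nat \<Rightarrow> real) \<Rightarrow> nat \<Rightarrow> (nat \<Rightarrow> nat) \<Rightarrow> nat \<Rightarrow> nat \<Rightarrow> nat \<Rightarrow> real" where
  "Xmat v d \<sigma> k r c = (if c = 0 then 1 else (if r < k then v (\<sigma> (r + 1)) c else v (d + 1) c))"

text \<open>Y(sigma,k): k x k; rows r = 0..k-1 are (1, x_{sigma(r+1),1..k-1}).\<close>
definition Ymat :: "(nat \<Rightarrow> nat \<Rightarrow> real) \<Rightarrow> (nat \<Rightarrow> nat) \<Rightarrow> nat \<Rightarrow> nat \<Rightarrow> nat \<Rightarrow> real" where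
  "Ymat v \<sigma> k r c = (if c = 0 then 1 else v (\<sigma> (r + 1)) c)"

definition zval :: "(nat \<Rightarrow> nat \<Rightarrow> real) \<Rightarrow> nat \<Rightarrow> (nat \<Rightarrow> nat) \<Rightarrow> nat \<Rightarrow> real" where
  "zval v d \<sigma> k = (if k = 0 then 1 else detn (k + 1) (Xmat v d \<sigma> k) / detn k (Ymat v \<sigma> k))"

end

theory Submission
  imports Defs "Jordan_Normal_Form.Determinant"
begin


lemma detn_det: "detn n A = Determinant.det (mat n n (\<lambda>(i,j). A i j))"
  unfolding detn_def det_def by (auto simp: atLeast0LessThan intro!: sum.cong prod.cong)

lemma detn_cong: "(\<And>i j. i<n \<Longrightarrow> j<n \<Longrightarrow> A i j = B i j) \<Longrightarrow> detn n A = detn n B"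
  unfolding detn_def by (auto intro!: sum.cong prod.cong simp: permutes_def)

lemma detn_kernel:
  assumes "detn n A \<noteq> 0" "\<And>r. r<n \<Longrightarrow> (\<Sum>j<n. A r j * c j) = 0" "j < n"
  shows "c j = 0"
proof (rule ccontr)
  assume cj: "c j \<noteq> 0"
  let ?M = "mat n n (\<lambda>(i,j). A i j)"
  have M: "?M \<in> carrier_mat n n" by simp
  have "vec n c \<in> carrier_vec n" by simp
  moreover have "vec n c \<noteq> 0\<^sub>v n" using cj assms(3)
    by (metis index_vec index_zero_vec(1))
  moreover have "?M *\<^sub>v vec n c = 0\<^sub>v n"
    using assms(2) by (auto simp: mult_mat_vec_def scalar_prod_def atLeast0LessThan intro!: eq_vecI)
  ultimately have "Determinant.det ?M = 0" using det_0_iff_vec_prod_zero[OF M] by blast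
  thus False using assms(1) by (simp add: detn_det)
qed

lemma detn_solve:
  assumes "detn n A \<noteq> 0"
  shows "\<exists>c. \<forall>r<n. (\<Sum>j<n. A r j * c j) = b r"
proof -
  let ?M = "mat n n (\<lambda>(i,j). A i j)"
  have M: "?M \<in> carrier_mat n n" by simp
  have "Determinant.det ?M \<noteq> 0" using assms by (simp add: detn_det)
  from det_non_zero_imp_unit[OF M this, of undefined]
  obtain B where B: "B \<in> carrier_mat n n" "?M * B = 1\<^sub>m n"
    by (auto simp: Units_def ring_mat_def)
  define c where "c = B *\<^sub>v vec n b"
  have "?M *\<^sub>v c = vec n b" unfolding c_def
    using B by (simp add: assoc_mult_mat_vec[symmetric, of _ n n _ n])
  hence "\<forall>r<n. (?M *\<^sub>v c) $ r = b r" by simp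
  moreover have "dim_vec c = n" using B by (simp add: c_def)
  ultimately show ?thesis
    by (intro exI[of _ "\<lambda>j. c $ j"]) (auto simp: mult_mat_vec_def scalar_prod_def atLeast0LessThan)
qed



lemma detn_reduce:
  assumes "\<And>r. r<n \<Longrightarrow> A r n = (\<Sum>j<n. a j * A r j)"
  shows "detn (Suc n) A = (A n n - (\<Sum>j<n. a j * A n j)) * detn n A"
proof -
  define M where "M = mat (Suc n) (Suc n) (\<lambda>(i,j). A i j)"
  define E :: "real mat" where "E = mat (Suc n) (Suc n) (\<lambda>(i,j). if i = j then 1 else if j = n then - a i else 0)"
  have M: "M \<in> carrier_mat (Suc n) (Suc n)" and E: "E \<in> carrier_mat (Suc n) (Suc n)"
    by (auto simp: M_def E_def)
  have "upper_triangular E" by (auto simp: upper_triangular_def E_def)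
  hence "Determinant.det E = prod_list (diag_mat E)" by (rule det_upper_triangular[OF _ E])
  also have "\<dots> = (\<Prod>i = 0..<Suc n. E $$ (i,i))" by (rule prod_list_diag_prod[of E, unfolded dim_row_mat, folded E_def] | simp add: prod_list_diag_prod E_def)
  also have "\<dots> = 1" by (intro prod.neutral) (auto simp: E_def)
  finally have dE: "Determinant.det E = 1" .
  define B where "B = M * E"
  have B: "B \<in> carrier_mat (Suc n) (Suc n)" using M E by (simp add: B_def)
  have dB: "Determinant.det B = detn (Suc n) A"
    using det_mult[OF M E] dE by (simp add: B_def detn_det M_def)
  have Bent: "B $$ (r, c) = (if c = n then A r n - (\<Sum>j<n. a j * A r j) else A r c)"
    if "r < Suc n" "c < Suc n" for r c
  proof -
    have "B $$ (r,c) = (\<Sum>i<Suc n. A r i * E $$ (i, c))"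
      using that by (simp add: B_def M_def E_def scalar_prod_def atLeast0LessThan)
    also have "\<dots> = (if c = n then A r n - (\<Sum>j<n. a j * A r j) else A r c)"
    proof (cases "c = n")
      case True
      have "(\<Sum>i<Suc n. A r i * E $$ (i, c)) = (\<Sum>i<n. A r i * E $$ (i, c)) + A r n * E $$ (n, c)"
        by simp
      also have "(\<Sum>i<n. A r i * E $$ (i, c)) = (\<Sum>i<n. - (a i * A r i))"
        using True by (intro sum.cong) (auto simp: E_def)
      finally show ?thesis using True by (simp add: E_def sum_negf)
    next
      case False
      have "(\<Sum>i<Suc n. A r i * E $$ (i, c)) = (\<Sum>i<Suc n. if i = c then A r c else 0)"
        using False that by (intro sum.cong) (auto simp: E_def)
      thus ?thesis using False that by simp
    qed
    finally show ?thesis .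
  qed
  have "Determinant.det B = (\<Sum>i<Suc n. B $$ (i,n) * cofactor B i n)"
    using laplace_expansion_column[OF B] by simp
  also have "\<dots> = (\<Sum>i<Suc n. if i = n then B $$ (n,n) * cofactor B n n else 0)"
    using assms by (intro sum.cong) (auto simp: Bent)
  also have "\<dots> = B $$ (n,n) * cofactor B n n" by simp
  also have "cofactor B n n = Determinant.det (mat_delete B n n)"
    by (simp add: cofactor_def)
  also have "mat_delete B n n = mat n n (\<lambda>(i,j). A i j)"
    using B by (intro eq_matI) (auto simp: mat_delete_def Bent)
  finally show ?thesis using dB by (simp add: Bent detn_det)
qed



definition lift :: "(nat \<Rightarrow> real) \<Rightarrow> nat \<Rightarrow> real" where
  "lift u j = (if j = 0 then 1 else u j)"

lemma aff_lemma:
  assumes "finite J" "\<And>x. x\<in>S \<Longrightarrow> (\<Sum>j\<in>J. cc j * x j) = t" "y \<in> aff_hull S"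
  shows "(\<Sum>j\<in>J. cc j * y j) = t"
proof -
  from assms(3) obtain F c where F: "finite F" "F \<subseteq> S" "sum c F = 1"
    and y: "y = (\<lambda>j. \<Sum>x\<in>F. c x * x j)" unfolding aff_hull_def by blast
  have "(\<Sum>j\<in>J. cc j * y j) = (\<Sum>j\<in>J. \<Sum>x\<in>F. c x * (cc j * x j))"
    by (simp add: y sum_distrib_left mult.assoc mult.left_commute)
  also have "\<dots> = (\<Sum>x\<in>F. c x * (\<Sum>j\<in>J. cc j * x j))"
    by (subst sum.swap) (simp add: sum_distrib_left)
  also have "\<dots> = (\<Sum>x\<in>F. c x * t)"
    using F assms(2) by (intro sum.cong) auto
  also have "\<dots> = t" using F by (simp add: sum_distrib_right[symmetric])
  finally show ?thesis .
qed

lemma lift_sum: "1 \<le> n \<Longrightarrow> (\<Sum>j<n. c j * lift y j) = c 0 + (\<Sum>j\<in>{1..<n}. c j * y j)"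
proof -
  assume "1 \<le> n"
  hence "{..<n} = insert 0 {1..<n}" by auto
  thus ?thesis by (simp add: lift_def)
qed

lemma aff_lift:
  assumes "1 \<le> n" "\<And>x. x\<in>S \<Longrightarrow> (\<Sum>j<n. c j * lift x j) = t" "y \<in> aff_hull S"
  shows "(\<Sum>j<n. c j * lift y j) = t"
proof -
  have "(\<Sum>j\<in>{1..<n}. c j * y j) = t - c 0"
    by (rule aff_lemma[OF _ _ assms(3)]) (use assms(2) lift_sum[OF assms(1)] in force)+
  thus ?thesis using lift_sum[OF assms(1)] by simp
qed

lemma conv_sub_aff: "conv_hull S \<subseteq> aff_hull S"
  unfolding conv_hull_def aff_hull_def by blast

lemma aff_mono: "S \<subseteq> T \<Longrightarrow> aff_hull S \<subseteq> aff_hull T"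
  unfolding aff_hull_def by blast

lemma lf_aff: "lattice_face N W \<Longrightarrow> aff_hull W = Rd N"
proof (cases N)
  case (Suc n) thus "lattice_face N W \<Longrightarrow> aff_hull W = Rd N"
    by (cases n) (auto simp: polytope_vertices_def)
qed auto

definition unitv :: "nat \<Rightarrow> nat \<Rightarrow> real" where "unitv i = (\<lambda>j. if j = i then 1 else 0)"

lemma unitv_Zd: "i \<in> {1..N} \<Longrightarrow> unitv i \<in> Zd N"
  by (auto simp: unitv_def Zd_def Rd_def)

lemma zero_Zd: "(\<lambda>j. 0) \<in> Zd N"
  by (auto simp: Zd_def Rd_def)

lemma nd_from_aff:
  assumes "Rd N \<subseteq> aff_hull T" "\<And>x. x\<in>T \<Longrightarrow> (\<Sum>j<Suc N. c j * lift x j) = 0" "j < Suc N"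
  shows "c j = 0"
proof -
  have h: "(\<Sum>j<Suc N. c j * lift y j) = 0" if "y \<in> Rd N" for y
    using aff_lift[of "Suc N" T c 0 y] assms(1,2) that by auto
  have c0: "c 0 = 0"
    using h[of "\<lambda>j. 0"] lift_sum[of "Suc N" c "\<lambda>j. 0"] by (simp add: Rd_def)
  show ?thesis
  proof (cases "j = 0")
    case True thus ?thesis using c0 by simp
  next
    case False
    have "unitv j \<in> Rd N" using unitv_Zd[of j N] False assms(3) by (auto simp: Zd_def)
    from h[OF this] have "(\<Sum>i\<in>{1..<Suc N}. c i * unitv j i) = 0"
      using lift_sum[of "Suc N" c "unitv j"] c0 by simp
    moreover have "(\<Sum>i\<in>{1..<Suc N}. c i * unitv j i) = (\<Sum>i\<in>{1..<Suc N}. if i = j then c j else 0)"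
      by (intro sum.cong) (auto simp: unitv_def)
    ultimately show ?thesis using False assms(3) by (cases "j < N") auto
  qed
qed

lemma detn_nonzero:
  assumes "\<And>c. (\<And>r. r<n \<Longrightarrow> (\<Sum>j<n. A r j * c j) = 0) \<Longrightarrow> (\<forall>j<n. c j = 0)"
  shows "detn n A \<noteq> 0"
proof
  assume d: "detn n A = 0"
  let ?M = "mat n n (\<lambda>(i,j). A i j)"
  have M: "?M \<in> carrier_mat n n" by simp
  from d det_0_iff_vec_prod_zero[OF M] obtain w where w: "w \<in> carrier_vec n" "w \<noteq> 0\<^sub>v n"
    "?M *\<^sub>v w = 0\<^sub>v n" by (auto simp: detn_det)
  have "\<forall>j<n. w $ j = 0"
  proof (rule assms)
    fix r assume r: "r < n"
    have "(?M *\<^sub>v w) $ r = 0" using w(3) r by simp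
    thus "(\<Sum>j<n. A r j * w $ j) = 0" using r w(1)
      by (simp add: mult_mat_vec_def scalar_prod_def atLeast0LessThan)
  qed
  hence "w = 0\<^sub>v n" using w(1) by (intro eq_vecI) auto
  thus False using w(2) by simp
qed



lemma proj_lt: "j < n \<Longrightarrow> proj n u j = u j"
  by (simp add: proj_def)

lemma lift_proj: "j < n \<Longrightarrow> lift (proj n u) j = lift u j"
  by (simp add: proj_def lift_def)

lemma sum_cprime: "(\<Sum>j<Suc (Suc n). (if j = Suc n then -1 else a j) * lift u j)
   = (\<Sum>j<Suc n. a j * lift u j) - u (Suc n)"
proof -
  have "(\<Sum>j<Suc n. (if j = Suc n then -1 else a j) * lift u j) = (\<Sum>j<Suc n. a j * lift u j)"
    by (intro sum.cong) auto
  thus ?thesis by (simp add: lift_def)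
qed

lemma lf_main:
  "lattice_face n V \<Longrightarrow> finite V \<Longrightarrow> n \<le> card V \<Longrightarrow> 1 \<le> m \<Longrightarrow> m \<le> n \<Longrightarrow> U \<subseteq> V
   \<Longrightarrow> card U = m \<Longrightarrow> \<exists>a. (\<forall>j<m. a j \<in> \<int>) \<and> (\<forall>u\<in>U. u m = (\<Sum>j<m. a j * lift u j))"
proof (induction n arbitrary: V m U)
  case 0 thus ?case by simp
next
  case (Suc n)
  show ?case
  proof (cases n)
    case 0
    then have m1: "m = 1" using Suc.prems by simp
    from Suc.prems(7) m1 obtain u where U: "U = {u}" by (auto simp: card_Suc_eq)
    have "u 1 \<in> \<int>" using Suc.prems(1,6) \<open>n=0\<close> U by auto
    thus ?thesis using U m1 by (intro exI[of _ "\<lambda>j. u 1"]) (auto simp: lift_def)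
  next
    case (Suc n')
    have cond: "lattice_face n (vertices_of (proj (Suc n) ` U')) \<and>
        proj (Suc n) ` (aff_hull U' \<inter> Zd (Suc n)) = Zd n"
      if "U' \<subseteq> V" "card U' = Suc n" for U'
      using Suc.prems(1) \<open>n = Suc n'\<close> that by simp
    have fV: "finite V" using Suc.prems by simp
    have fU: "finite U" using Suc.prems(2,6) finite_subset by blast
    have "card (V - U) = card V - m" using Suc.prems(6,7) fU by (simp add: card_Diff_subset)
    hence "Suc n - m \<le> card (V - U)" using Suc.prems(3) by simp
    then obtain T where T: "T \<subseteq> V - U" "card T = Suc n - m"
      using obtain_subset_with_card_n by metis
    define U' where "U' = U \<union> T"
    have fT: "finite T" using T fV finite_subset by blast
    have UT: "U \<inter> T = {}" using T by auto
    have U'c: "card U' = card U + card T" using fU fT UT by (simp add: U'_def card_Un_disjoint)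
    have U': "U \<subseteq> U'" "U' \<subseteq> V" "card U' = Suc n"
      using T Suc.prems(5,6,7) U'c by (auto simp: U'_def)
    have fU': "finite U'" using U' fV finite_subset by blast
    obtain e where e: "bij_betw e {0..<Suc n} U'"
      using ex_bij_betw_nat_finite[OF fU'] U'(3) by metis
    have eU: "r < Suc n \<Longrightarrow> e r \<in> U'" for r using e by (auto simp: bij_betw_def)
    have eS: "u \<in> U' \<Longrightarrow> \<exists>r<Suc n. e r = u" for u using e by (auto simp: bij_betw_def)
    define P where "P = proj (Suc n)"
    define W where "W = vertices_of (P ` U')"
    have lfW: "lattice_face n W" and bc: "P ` (aff_hull U' \<inter> Zd (Suc n)) = Zd n"
      using cond[OF U'(2,3)] by (auto simp: W_def P_def)
    have "W \<subseteq> P ` U'" by (auto simp: W_def vertices_of_def)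
    hence affW: "Rd n \<subseteq> aff_hull (P ` U')" using lf_aff[OF lfW] aff_mono by blast
    have Psum: "(\<Sum>j<Suc n. c j * lift (P u) j) = (\<Sum>j<Suc n. c j * lift u j)" for c u
      by (intro sum.cong) (auto simp: P_def lift_proj)
    define L where "L r j = lift (e r) j" for r j
    have ND: "detn (Suc n) L \<noteq> 0"
    proof (rule detn_nonzero)
      fix c assume h: "\<And>r. r < Suc n \<Longrightarrow> (\<Sum>j<Suc n. L r j * c j) = 0"
      show "\<forall>j<Suc n. c j = 0"
      proof (intro allI impI)
        fix j assume j: "j < Suc n"
        show "c j = 0"
        proof (rule nd_from_aff[OF affW _ j])
          fix x assume "x \<in> P ` U'"
          then obtain r where r: "r < Suc n" "x = P (e r)" using eS by blast
          show "(\<Sum>j<Suc n. c j * lift x j) = 0"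
            using h[OF r(1)] r(2) Psum by (simp add: L_def mult.commute[of _ "c _"])
        qed
      qed
    qed
    have sep: "\<exists>c. (\<Sum>j<Suc n. c j * lift u0 j) = 1 \<and>
       (\<forall>u\<in>U'. u \<noteq> u0 \<longrightarrow> (\<Sum>j<Suc n. c j * lift u j) = 0)" if u0: "u0 \<in> U'" for u0
    proof -
      from detn_solve[OF ND, of "\<lambda>r. if e r = u0 then 1 else 0"]
      obtain c where c: "\<forall>r<Suc n. (\<Sum>j<Suc n. L r j * c j) = (if e r = u0 then 1 else 0)"
        by blast
      show ?thesis
      proof (intro exI[of _ c] conjI ballI impI)
        obtain r where r: "r < Suc n" "e r = u0" using eS u0 by blast
        have "(\<Sum>j<Suc n. L r j * c j) = 1" using c[rule_format, OF r(1)] r(2) by simp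
        moreover have "(\<Sum>j<Suc n. c j * lift u0 j) = (\<Sum>j<Suc n. L r j * c j)"
          by (intro sum.cong) (auto simp: L_def r(2))
        ultimately show "(\<Sum>j<Suc n. c j * lift u0 j) = 1" by simp
      next
        fix u assume "u \<in> U'" "u \<noteq> u0"
        then obtain r where r: "r < Suc n" "e r = u" "u \<noteq> u0" using eS by blast
        have "(\<Sum>j<Suc n. L r j * c j) = 0" using c[rule_format, OF r(1)] r(2,3) by simp
        moreover have "(\<Sum>j<Suc n. c j * lift u j) = (\<Sum>j<Suc n. L r j * c j)"
          by (intro sum.cong) (auto simp: L_def r(2))
        ultimately show "(\<Sum>j<Suc n. c j * lift u j) = 0" by simp
      qed
    qed
    have inj: "inj_on P U'"
    proof (rule inj_onI, rule ccontr)
      fix u1 u2 assume u: "u1 \<in> U'" "u2 \<in> U'" "P u1 = P u2" "u1 \<noteq> u2"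
      obtain c where "(\<Sum>j<Suc n. c j * lift u1 j) = 1"
        "(\<forall>u\<in>U'. u \<noteq> u1 \<longrightarrow> (\<Sum>j<Suc n. c j * lift u j) = 0)" using sep[OF u(1)] by blast
      thus False using u Psum[of c u1] Psum[of c u2] by auto
    qed
    have Wall: "W = P ` U'"
    proof
      show "W \<subseteq> P ` U'" by fact
      show "P ` U' \<subseteq> W"
      proof
        fix x assume "x \<in> P ` U'"
        then obtain u0 where u0: "u0 \<in> U'" "x = P u0" by blast
        obtain c where c1: "(\<Sum>j<Suc n. c j * lift u0 j) = 1" and
          c2: "\<forall>u\<in>U'. u \<noteq> u0 \<longrightarrow> (\<Sum>j<Suc n. c j * lift u j) = 0" using sep[OF u0(1)] by blast
        have "x \<notin> conv_hull (P ` U' - {x})"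
        proof
          assume "x \<in> conv_hull (P ` U' - {x})"
          hence xa: "x \<in> aff_hull (P ` U' - {x})" using conv_sub_aff by blast
          have "(\<Sum>j<Suc n. c j * lift x j) = 0"
          proof (rule aff_lift[OF _ _ xa])
            fix y assume "y \<in> P ` U' - {x}"
            then obtain u where "u \<in> U'" "y = P u" "u \<noteq> u0" using u0 by blast
            thus "(\<Sum>j<Suc n. c j * lift y j) = 0" using c2 Psum by simp
          qed simp
          thus False using c1 Psum u0 by simp
        qed
        thus "x \<in> W" using \<open>x \<in> P ` U'\<close> by (simp add: W_def vertices_of_def)
      qed
    qed
    have cardW: "card W = Suc n" using Wall card_image[OF inj] U'(3) by simp
    show ?thesis
    proof (cases "m = Suc n")
      case True
      hence UU: "U = U'" using card_subset_eq[OF fU' U'(1)] U'(3) Suc.prems(7) by simp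
      have "\<exists>a. \<forall>r<Suc n. (\<Sum>j<Suc n. L r j * a j) = e r (Suc n)"
        by (rule detn_solve[OF ND])
      then obtain a where a: "\<forall>r<Suc n. (\<Sum>j<Suc n. L r j * a j) = e r (Suc n)"
        by (rule exE)
      have rel: "u (Suc n) = (\<Sum>j<Suc n. a j * lift u j)" if uU: "u \<in> U'" for u
      proof -
        obtain r where r: "r < Suc n" "e r = u" using eS[OF uU] by blast
        have 1: "(\<Sum>j<Suc n. L r j * a j) = e r (Suc n)" using a r(1) by blast
        have 2: "(\<Sum>j<Suc n. a j * lift u j) = (\<Sum>j<Suc n. L r j * a j)"
          unfolding L_def r(2) by (simp add: mult.commute)
        show ?thesis using 1 2 r(2) by simp
      qed
      have int: "(\<Sum>j<Suc n. a j * lift z j) \<in> \<int>" if z: "z \<in> Zd n" for z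
      proof -
        have "z \<in> P ` (aff_hull U' \<inter> Zd (Suc n))" using z bc by simp
        then obtain p where p0: "p \<in> aff_hull U' \<inter> Zd (Suc n)" "z = P p" by (rule imageE)
        have p: "p \<in> aff_hull U'" "p \<in> Zd (Suc n)" "P p = z" using p0 by auto
        have lz: "lift z j = lift p j" if "j < Suc n" for j
          using lift_proj[OF that, of p] p(3) by (simp add: P_def)
        have "(\<Sum>j<Suc (Suc n). (if j = Suc n then -1 else a j) * lift p j) = 0"
        proof (rule aff_lift[OF _ _ p(1)])
          fix u assume "u \<in> U'"
          thus "(\<Sum>j<Suc (Suc n). (if j = Suc n then -1 else a j) * lift u j) = 0"
            using rel[OF \<open>u \<in> U'\<close>] sum_cprime[of n a u] by simp
        qed simp
        hence "p (Suc n) = (\<Sum>j<Suc n. a j * lift p j)"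
          using sum_cprime[of n a p] by simp
        also have "\<dots> = (\<Sum>j<Suc n. a j * lift z j)"
          using lz by (intro sum.cong) auto
        finally have eq: "p (Suc n) = (\<Sum>j<Suc n. a j * lift z j)" .
        have "p (Suc n) \<in> \<int>" using p(2) by (auto simp: Zd_def)
        thus ?thesis using eq by simp
      qed
      have aint: "a j \<in> \<int>" if j: "j < Suc n" for j
      proof -
        have a0: "a 0 \<in> \<int>"
          using int[OF zero_Zd] lift_sum[of "Suc n" a "\<lambda>j. 0"] by simp
        show ?thesis
        proof (cases "j = 0")
          case True thus ?thesis using a0 by simp
        next
          case False
          have "(\<Sum>i\<in>{1..<Suc n}. a i * unitv j i) = (\<Sum>i\<in>{1..<Suc n}. if i = j then a j else 0)"
            by (intro sum.cong) (auto simp: unitv_def)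
          also have "\<dots> = a j" using j False by simp
          finally have "(\<Sum>j'<Suc n. a j' * lift (unitv j) j') = a 0 + a j"
            using lift_sum[of "Suc n" a "unitv j"] by simp
          moreover have "unitv j \<in> Zd n" using j False by (intro unitv_Zd) auto
          ultimately have "a 0 + a j \<in> \<int>" using int[of "unitv j"] by simp
          hence "(a 0 + a j) - a 0 \<in> \<int>" using a0 Ints_diff by blast
          thus ?thesis by simp
        qed
      qed
      show ?thesis
      proof (intro exI[of _ a] conjI allI impI ballI)
        fix j assume "j < m" thus "a j \<in> \<int>" using aint True by simp
      next
        fix u assume "u \<in> U" thus "u m = (\<Sum>j<m. a j * lift u j)" using rel UU True by simp
      qed
    next
      case False
      hence mn: "m \<le> n" using Suc.prems(5) by simp
      have s1: "P ` U \<subseteq> W" using Wall U'(1) by auto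
      have s2: "card (P ` U) = m"
        using card_image[OF inj_on_subset[OF inj U'(1)]] Suc.prems(7) by simp
      have s3: "finite W" using Wall fU' by simp
      have s4: "n \<le> card W" using cardW by simp
      have "\<exists>a. (\<forall>j<m. a j \<in> \<int>) \<and> (\<forall>w\<in>P ` U. w m = (\<Sum>j<m. a j * lift w j))"
        by (rule Suc.IH[OF lfW s3 s4 Suc.prems(4) mn s1 s2])
      then obtain a where a: "\<forall>j<m. a j \<in> \<int>" "\<forall>w\<in>P ` U. w m = (\<Sum>j<m. a j * lift w j)"
        by blast
      show ?thesis
      proof (intro exI[of _ a] conjI ballI)
        fix u assume u: "u \<in> U"
        have "u m = P u m" using mn by (simp add: P_def proj_lt)
        also have "\<dots> = (\<Sum>j<m. a j * lift (P u) j)" using a(2) u by auto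
        also have "\<dots> = (\<Sum>j<m. a j * lift u j)"
          using mn by (intro sum.cong) (auto simp: P_def lift_proj)
        finally show "u m = (\<Sum>j<m. a j * lift u j)" .
      qed (use a in auto)
    qed
  qed
qed



lemma Xmat_lift: "Xmat v d \<sigma> k r j = lift (if r < k then v (\<sigma> (r+1)) else v (d+1)) j"
  by (simp add: Xmat_def lift_def)

lemma Ymat_lift: "Ymat v \<sigma> k r j = lift (v (\<sigma> (r+1))) j"
  by (simp add: Ymat_def lift_def)

lemma Xred:
  assumes "\<And>r. r<k \<Longrightarrow> v (\<sigma> (r+1)) k = (\<Sum>j<k. a j * lift (v (\<sigma> (r+1))) j)" "1 \<le> k"
  shows "detn (Suc k) (Xmat v d \<sigma> k) = (v (d+1) k - (\<Sum>j<k. a j * lift (v (d+1)) j)) * detn k (Ymat v \<sigma> k)"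
proof -
  have "detn (Suc k) (Xmat v d \<sigma> k) = (Xmat v d \<sigma> k k k - (\<Sum>j<k. a j * Xmat v d \<sigma> k k j)) * detn k (Xmat v d \<sigma> k)"
  proof (rule detn_reduce)
    fix r assume r: "r < k"
    have "Xmat v d \<sigma> k r k = v (\<sigma> (r+1)) k" using r assms(2) by (simp add: Xmat_lift lift_def)
    also have "\<dots> = (\<Sum>j<k. a j * Xmat v d \<sigma> k r j)" using assms(1)[OF r] r by (simp add: Xmat_lift)
    finally show "Xmat v d \<sigma> k r k = (\<Sum>j<k. a j * Xmat v d \<sigma> k r j)" .
  qed
  also have "detn k (Xmat v d \<sigma> k) = detn k (Ymat v \<sigma> k)"
    by (rule detn_cong) (simp add: Xmat_lift Ymat_lift)
  also have "Xmat v d \<sigma> k k k = v (d+1) k" using assms(2) by (simp add: Xmat_lift lift_def)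
  also have "(\<Sum>j<k. a j * Xmat v d \<sigma> k k j) = (\<Sum>j<k. a j * lift (v (d+1)) j)"
    by (simp add: Xmat_lift)
  finally show ?thesis .
qed

lemma zval_eq:
  assumes "\<And>r. r<k \<Longrightarrow> v (\<sigma> (r+1)) k = (\<Sum>j<k. a j * lift (v (\<sigma> (r+1))) j)" "1 \<le> k"
  shows "zval v d \<sigma> k = (if detn k (Ymat v \<sigma> k) = 0 then 0 else v (d+1) k - (\<Sum>j<k. a j * lift (v (d+1)) j))"
  using Xred[where v=v and \<sigma>=\<sigma> and k=k and a=a and d=d, OF assms] assms(2) by (simp add: zval_def)

lemma lf_idx:
  assumes inj: "inj_on v {1..d+1}" and lf: "lattice_face d (v ` {1..d+1})"
    and S: "S \<subseteq> {1..d+1}" "card S = m" "1 \<le> m" "m \<le> d"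
  shows "\<exists>a. (\<forall>j<m. a j \<in> \<int>) \<and> (\<forall>i\<in>S. v i m = (\<Sum>j<m. a j * lift (v i) j))"
proof -
  have cV: "card (v ` {1..d+1}) = d + 1" using card_image[OF inj] by simp
  have cS: "card (v ` S) = m" using card_image[OF inj_on_subset[OF inj S(1)]] S(2) by simp
  have "\<exists>a. (\<forall>j<m. a j \<in> \<int>) \<and> (\<forall>u\<in>v ` S. u m = (\<Sum>j<m. a j * lift u j))"
    by (rule lf_main[OF lf _ _ S(3) S(4) _ cS]) (use cV S(1) in auto)
  thus ?thesis by auto
qed



lemma sumdiff: "1 \<le> k1 \<Longrightarrow> (\<Sum>j<Suc k1. b j * lift x j) - (\<Sum>j<Suc k1. a j * lift x j)
   = (\<Sum>j<k1. (b j - a j) * lift x j) + (b k1 - a k1) * x k1"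
proof -
  assume k1: "1 \<le> k1"
  have "(\<Sum>j<Suc k1. b j * lift x j) - (\<Sum>j<Suc k1. a j * lift x j) = (\<Sum>j<Suc k1. (b j - a j) * lift x j)"
    by (simp add: sum_subtractf left_diff_distrib)
  also have "\<dots> = (\<Sum>j<k1. (b j - a j) * lift x j) + (b k1 - a k1) * lift x k1" by simp
  finally show ?thesis using k1 by (simp add: lift_def)
qed

lemma sume2: "(\<Sum>j<k1. lift x j * ((b j - a j) + c * h j))
   = (\<Sum>j<k1. (b j - a j) * lift x j) + c * (\<Sum>j<k1. h j * lift x j)"
proof -
  have "(\<Sum>j<k1. lift x j * ((b j - a j) + c * h j)) = (\<Sum>j<k1. (b j - a j) * lift x j + c * (h j * lift x j))"
    by (intro sum.cong) (auto simp: algebra_simps)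
  also have "\<dots> = (\<Sum>j<k1. (b j - a j) * lift x j) + c * (\<Sum>j<k1. h j * lift x j)"
    by (simp add: sum.distrib sum_distrib_left)
  finally show ?thesis .
qed

lemma core:
  assumes k1: "1 \<le> k1"
  and A: "\<And>r. r<k1 \<Longrightarrow> v (\<sigma> (r+1)) (Suc k1) = (\<Sum>j<Suc k1. a j * lift (v (\<sigma> (r+1))) j)"
  and B: "\<And>r. r<k1 \<Longrightarrow> v (\<sigma> (r+1)) (Suc k1) = (\<Sum>j<Suc k1. b j * lift (v (\<sigma> (r+1))) j)"
  and Bw: "w (Suc k1) = (\<Sum>j<Suc k1. b j * lift w j)"
  and H: "\<And>r. r<k1 \<Longrightarrow> v (\<sigma> (r+1)) k1 = (\<Sum>j<k1. h j * lift (v (\<sigma> (r+1))) j)"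
  and det: "detn k1 (Ymat v \<sigma> k1) \<noteq> 0"
  shows "w (Suc k1) - (\<Sum>j<Suc k1. a j * lift w j) = (b k1 - a k1) * (w k1 - (\<Sum>j<k1. h j * lift w j))"
proof -
  define c where "c = b k1 - a k1"
  define e2 where "e2 j = (b j - a j) + c * h j" for j
  have e0: "e2 j = 0" if j: "j < k1" for j
  proof (rule detn_kernel[OF det _ j])
    fix r assume r: "r < k1"
    let ?x = "v (\<sigma> (r+1))"
    have "(\<Sum>j<Suc k1. b j * lift ?x j) - (\<Sum>j<Suc k1. a j * lift ?x j) = 0"
      using A[OF r] B[OF r] by simp
    hence 1: "(\<Sum>j<k1. (b j - a j) * lift ?x j) + c * ?x k1 = 0"
      using sumdiff[OF k1, of b ?x a] by (simp add: c_def)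
    have "(\<Sum>j<k1. Ymat v \<sigma> k1 r j * e2 j) = (\<Sum>j<k1. lift ?x j * ((b j - a j) + c * h j))"
      by (simp add: Ymat_lift e2_def)
    also have "\<dots> = (\<Sum>j<k1. (b j - a j) * lift ?x j) + c * ?x k1"
      using sume2[where x="?x" and b=b and a=a and c=c and h=h] H[OF r] by simp
    finally show "(\<Sum>j<k1. Ymat v \<sigma> k1 r j * e2 j) = 0" using 1 by simp
  qed
  have "(\<Sum>j<k1. lift w j * ((b j - a j) + c * h j)) = 0"
    using e0 by (simp add: e2_def)
  hence 2: "(\<Sum>j<k1. (b j - a j) * lift w j) = - c * (\<Sum>j<k1. h j * lift w j)"
    using sume2[where x=w and b=b and a=a and c=c and h=h] by simp
  have "w (Suc k1) - (\<Sum>j<Suc k1. a j * lift w j) = (\<Sum>j<k1. (b j - a j) * lift w j) + c * w k1"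
    using sumdiff[OF k1, of b w a] Bw by (simp add: c_def)
  also have "\<dots> = c * (w k1 - (\<Sum>j<k1. h j * lift w j))" using 2 by (simp add: algebra_simps)
  finally show ?thesis by (simp add: c_def)
qed



theorem mainTheorem10:
  fixes d k :: nat and v :: "nat \<Rightarrow> nat \<Rightarrow> real" and \<sigma> :: "nat \<Rightarrow> nat"
  assumes "1 \<le> d"
    and "inj_on v {1..d+1}"
    and "lattice_face d (v ` {1..d+1})"
    and "\<sigma> permutes {1..d}"
    and "1 \<le> k" and "k \<le> d"
  shows "zval v d \<sigma> k / zval v d \<sigma> (k - 1) \<in> \<int>"
proof -
  note inj = assms(2) and lf = assms(3) and perm = assms(4)
  have sinj: "inj_on \<sigma> A" for A using permutes_inj[OF perm] by (metis inj_on_subset subset_UNIV)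
  have srange: "i \<in> {1..d} \<Longrightarrow> \<sigma> i \<in> {1..d}" for i using permutes_in_image[OF perm] by simp
  define w where "w = v (d+1)"
  have S1: "\<sigma> ` {1..m} \<subseteq> {1..d+1}" "card (\<sigma> ` {1..m}) = m" if "m \<le> d" for m
    using srange that card_image[OF sinj[of "{1..m}"]] by force+
  have getS1: "\<exists>a. (\<forall>j<m. a j \<in> \<int>) \<and>
      (\<forall>r<m. v (\<sigma> (r+1)) m = (\<Sum>j<m. a j * lift (v (\<sigma> (r+1))) j))" if m: "1 \<le> m" "m \<le> d" for m
  proof -
    obtain a where a: "\<forall>j<m. a j \<in> \<int>" "\<forall>i\<in>\<sigma> ` {1..m}. v i m = (\<Sum>j<m. a j * lift (v i) j)"
      using lf_idx[OF inj lf S1[OF m(2)] m] by blast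
    show ?thesis using a by (intro exI[of _ a]) auto
  qed
  have zv: "zval v d \<sigma> m = (if detn m (Ymat v \<sigma> m) = 0 then 0 else w m - (\<Sum>j<m. a j * lift w j))"
    if "1 \<le> m" "\<forall>r<m. v (\<sigma> (r+1)) m = (\<Sum>j<m. a j * lift (v (\<sigma> (r+1))) j)" for m a
    unfolding w_def by (rule zval_eq) (use that in auto)
  obtain a where a: "\<forall>j<k. a j \<in> \<int>" "\<forall>r<k. v (\<sigma> (r+1)) k = (\<Sum>j<k. a j * lift (v (\<sigma> (r+1))) j)"
    using getS1[OF assms(5,6)] by blast
  have zk: "zval v d \<sigma> k = (if detn k (Ymat v \<sigma> k) = 0 then 0 else w k - (\<Sum>j<k. a j * lift w j))"
    using zv[OF assms(5) a(2)] .
  show ?thesis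
  proof (cases "k = 1")
    case True
    have "{d+1} \<subseteq> {1..d+1}" "card {d+1} = 1" by auto
    from lf_idx[OF inj lf this _ assms(1)] obtain b where b: "b 0 \<in> \<int>" "w 1 = b 0"
      by (auto simp: w_def lift_def)
    have "w 1 - (\<Sum>j<1. a j * lift w j) = b 0 - a 0" using b by (simp add: lift_def)
    moreover have "b 0 - a 0 \<in> \<int>" using a(1) b(1) True by simp
    moreover have "zval v d \<sigma> 0 = 1" by (simp add: zval_def)
    ultimately show ?thesis using zk True by auto
  next
    case False
    then obtain k1 where k: "k = Suc k1" and k1: "1 \<le> k1" using assms(5)
      by (metis One_nat_def Suc_pred less_one linorder_not_le not_less_eq_eq)
    define S2 where "S2 = insert (d+1) (\<sigma> ` {1..k1})"
    have "d + 1 \<notin> \<sigma> ` {1..k1}" using srange assms(6) k by fastforce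
    hence cS2: "card S2 = k" using S1(2)[of k1] assms(6) k by (simp add: S2_def)
    have sS2: "S2 \<subseteq> {1..d+1}" using S1(1)[of k1] assms(6) k by (auto simp: S2_def)
    obtain b where b: "\<forall>j<k. b j \<in> \<int>" "\<forall>i\<in>S2. v i k = (\<Sum>j<k. b j * lift (v i) j)"
      using lf_idx[OF inj lf sS2 cS2 assms(5,6)] by blast
    obtain h where h: "\<forall>j<k1. h j \<in> \<int>"
       "\<forall>r<k1. v (\<sigma> (r+1)) k1 = (\<Sum>j<k1. h j * lift (v (\<sigma> (r+1))) j)"
      using getS1[OF k1] assms(6) k by force
    have zk1: "zval v d \<sigma> k1 = (if detn k1 (Ymat v \<sigma> k1) = 0 then 0 else w k1 - (\<Sum>j<k1. h j * lift w j))"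
      using zv[OF k1 h(2)] .
    have km: "k - 1 = k1" using k by simp
    show ?thesis
    proof (cases "detn k (Ymat v \<sigma> k) = 0 \<or> detn k1 (Ymat v \<sigma> k1) = 0")
      case True thus ?thesis using zk zk1 km by auto
    next
      case False
      hence d1: "detn k1 (Ymat v \<sigma> k1) \<noteq> 0" by simp
      have Bw: "w (Suc k1) = (\<Sum>j<Suc k1. b j * lift w j)"
        using b(2) k by (simp add: S2_def w_def)
      have B: "v (\<sigma> (r+1)) (Suc k1) = (\<Sum>j<Suc k1. b j * lift (v (\<sigma> (r+1))) j)" if r: "r < k1" for r
      proof -
        have "\<sigma> (r+1) \<in> S2" using r by (auto simp: S2_def)
        thus ?thesis using b(2) k by simp
      qed
      have A: "v (\<sigma> (r+1)) (Suc k1) = (\<Sum>j<Suc k1. a j * lift (v (\<sigma> (r+1))) j)" if r: "r < k1" for r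
        using a(2) r k by simp
      have core': "w (Suc k1) - (\<Sum>j<Suc k1. a j * lift w j) = (b k1 - a k1) * (w k1 - (\<Sum>j<k1. h j * lift w j))"
        by (rule core[OF k1 A B Bw _ d1]) (use h(2) in auto)
      have cint: "b k1 - a k1 \<in> \<int>" using a(1) b(1) k by simp
      define g where "g = w k1 - (\<Sum>j<k1. h j * lift w j)"
      have "zval v d \<sigma> k / zval v d \<sigma> (k - 1) = ((b k1 - a k1) * g) / g"
        using zk zk1 km False core' k by (simp add: g_def)
      also have "\<dots> \<in> \<int>" using cint by (cases "g = 0") auto
      finally show ?thesis .
    qed
  qed
qed

end
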